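(* Let $\mathbf L\in\mathbb R_+^{n\times k}$ and $\boldsymbol\psi:\mathcal C\to\mathbb R_+^n$. Suppose there exist $r\in\mathbb N$ and $\mathbf z_1,\dots,\mathbf z_r\in\mathcal R_\psi$ such that $\bigcup_{j=1}^r\mathcal N^\psi(\mathbf z_j)=\Delta_n$ and for each $j\in[r]$ there exists $t\in[k]$ with $\mathcal N^\psi(\mathbf z_j)\subseteq\mathcal Q^{\mathbf L}_t$. Then every $\mathbf z\in\mathcal S_\psi$ can be written as $\mathbf z=\mathbf z'+\mathbf z''$ for some $\mathbf z'\in\operatorname{conv}(\{\mathbf z_1,\dots,\mathbf z_r\})$ and $\mathbf z''\in\mathbb R_+^n$.
   Context: Notation: $[m]=\{1,\dots,m\}$; $\Delta_n=\{\mathbf p\in\mathbb R_+^n:\sum_i p_i=1\}$. A loss matrix $\mathbf L\in\mathbb R_+^{n\times k}$ has columns $\boldsymbol\ell_t$, $t\in[k]$. A surrogate loss is $\boldsymbol\psi:\mathcal C\to\mathbb R_+^n$ with $\mathcal C\subseteq\mathbb R^d$ convex; $\mathcal R_\psi=\boldsymbol\psi(\mathcal C)$, $\mathcal S_\psi=\operatorname{conv}(\mathcal R_\psi)$. Trigger probability set: $\mathcal Q^{\mathbf L}_t=\{\mathbf p\in\Delta_n: t\in\operatorname{argmin}_{t'\in[k]}\mathbf p^\top\boldsymbol\ell_{t'}\}$. Positive normal set at $\mathbf z\in\mathcal S_\psi$: $\mathcal N^\psi(\mathbf z)=\{\mathbf p\in\Delta_n:\mathbf p^\top\mathbf z=\inf_{\mathbf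 z'\in\mathcal S_\psi}\mathbf p^\top\mathbf z'\}$. *)

theory Defs
  imports "HOL-Analysis.Analysis"
begin

text \<open>Vectors in R^n are modelled as real^'n with a finite index type 'n (outcomes),
  predictions [k] as a finite type 'k; a loss matrix is L :: real^'k^'n, with L$y$t
  the loss of prediction t on outcome y; column t is the vector (\<chi> y. L$y$t).\<close>

definition nonneg_orthant :: "(real^'n) set" where
  "nonneg_orthant = {x. \<forall>i. 0 \<le> x$i}"

definition prob_simplex :: "(real^'n) set" where
  "prob_simplex = {p. (\<forall>i. 0 \<le> p$i) \<and> (\<Sum>i\<in>UNIV. p$i) = 1}"

definition loss_col :: "real^'k^'n \<Rightarrow> 'k \<Rightarrow> real^'n" where
  "loss_col L t = (\<chi> y. L$y$t)"

definition trigger_set :: "real^'k^'n \<Rightarrow> 'k \<Rightarrow> (real^'n) set" where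
  "trigger_set L t = {p \<in> prob_simplex. \<forall>t'. p \<bullet> loss_col L t \<le> p \<bullet> loss_col L t'}"

definition surr_range :: "('d \<Rightarrow> real^'n) \<Rightarrow> 'd set \<Rightarrow> (real^'n) set" where
  "surr_range psi C = psi ` C"

definition surr_hull :: "('d \<Rightarrow> real^'n) \<Rightarrow> 'd set \<Rightarrow> (real^'n) set" where
  "surr_hull psi C = convex hull (surr_range psi C)"

definition pos_normal_set :: "('d \<Rightarrow> real^'n) \<Rightarrow> 'd set \<Rightarrow> real^'n \<Rightarrow> (real^'n) set" where
  "pos_normal_set psi C z =
     {p \<in> prob_simplex. p \<bullet> z = Inf ((\<lambda>z'. p \<bullet> z') ` surr_hull psi C)}"

end

theory Submission
  imports Defs
begin

lemma closed_orth: "closed (nonneg_orthant :: (real^'n) set)"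
proof -
  have "nonneg_orthant = (\<Inter>i. {x::real^'n. 0 \<le> x$i})" unfolding nonneg_orthant_def by auto
  moreover have "closed {x::real^'n. 0 \<le> x$i}" for i
    by (intro closed_Collect_le continuous_intros)
  ultimately show ?thesis by (metis closed_INT)
qed

lemma convex_orth: "convex (nonneg_orthant :: (real^'n) set)"
  unfolding nonneg_orthant_def convex_def by (auto intro!: add_nonneg_nonneg)

lemma simplex_ne: "(\<chi> i. 1 / real CARD('n)) \<in> (prob_simplex :: (real^'n::finite) set)"
  unfolding prob_simplex_def by auto

theorem mainTheorem6:
  fixes L :: "real^'k::finite^'n::finite"
    and psi :: "real^'d::finite \<Rightarrow> real^'n"
    and C :: "(real^'d) set"
    and r :: nat
    and zs :: "nat \<Rightarrow> real^'n"
  assumes L_nonneg: "\<forall>y t. 0 \<le> L$y$t"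
    and C_convex: "convex C"
    and psi_nonneg: "\<forall>x\<in>C. psi x \<in> nonneg_orthant"
    and zs_range: "\<forall>j\<in>{1..r}. zs j \<in> surr_range psi C"
    and cover: "(\<Union>j\<in>{1..r}. pos_normal_set psi C (zs j)) = prob_simplex"
    and trig: "\<forall>j\<in>{1..r}. \<exists>t. pos_normal_set psi C (zs j) \<subseteq> trigger_set L t"
  shows "\<forall>z\<in>surr_hull psi C. \<exists>z' z''. z' \<in> convex hull (zs ` {1..r}) \<and>
            z'' \<in> nonneg_orthant \<and> z = z' + z''"
proof (rule ballI, rule ccontr)
  fix z assume zS: "z \<in> surr_hull psi C"
    and nz: "\<not> (\<exists>z' z''. z' \<in> convex hull (zs ` {1..r}) \<and> z'' \<in> nonneg_orthant \<and> z = z' + z'')"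
  define H where "H = convex hull (zs ` {1..r})"
  define K where "K = (\<Union>x\<in>nonneg_orthant. \<Union>y\<in>H. {x + y})"
  have "r \<noteq> 0"
  proof
    assume "r = 0"
    then have "prob_simplex = ({} :: (real^'n) set)" using cover by simp
    with simplex_ne show False by blast
  qed
  have cH: "compact H" unfolding H_def by (intro compact_convex_hull finite_imp_compact) auto
  have clK: "closed K" unfolding K_def by (rule closed_compact_sums[OF closed_orth cH])
  have cvK: "convex K" unfolding K_def H_def by (intro convex_sums convex_orth convex_convex_hull)
  have zK: "z \<notin> K" using nz unfolding K_def H_def by (metis (no_types, lifting) UN_E add.commute singletonD)
  obtain a b where ab: "a \<bullet> z < b" "\<forall>x\<in>K. b < a \<bullet> x"
    using separating_hyperplane_closed_point[OF cvK clK zK] by blast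
  have inK: "h + y \<in> K" if "h \<in> H" "y \<in> nonneg_orthant" for h y
    using that unfolding K_def by (metis (no_types, lifting) UN_iff add.commute singletonI)
  have z0: "0 \<in> nonneg_orthant" unfolding nonneg_orthant_def by auto
  have zsH: "zs j \<in> H" if "j \<in> {1..r}" for j unfolding H_def using that
    by (simp add: hull_inc)
  have hH: "zs 1 \<in> H" using zsH \<open>r \<noteq> 0\<close> by auto
  have bh: "b < a \<bullet> zs 1" using ab(2) inK[OF hH z0] by simp
  have anon: "0 \<le> a$i" for i
  proof (rule ccontr)
    assume "\<not> 0 \<le> a$i"
    define t where "t = (a \<bullet> zs 1 - b) / (- a$i)"
    have t0: "0 \<le> t" using bh \<open>\<not> 0 \<le> a$i\<close> unfolding t_def by (intro divide_nonneg_nonneg) auto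
    have "t *\<^sub>R axis i 1 \<in> nonneg_orthant" using t0
      unfolding nonneg_orthant_def by (auto simp: axis_def)
    then have "b < a \<bullet> (zs 1 + t *\<^sub>R axis i 1)" using ab(2) inK[OF hH] by blast
    also have "a \<bullet> (zs 1 + t *\<^sub>R axis i 1) = a \<bullet> zs 1 + t * a$i"
      by (simp add: inner_add_right inner_axis)
    also have "\<dots> = b" using \<open>\<not> 0 \<le> a$i\<close> unfolding t_def by (simp add: field_simps)
    finally show False by simp
  qed
  have "a \<noteq> 0" using ab(1) bh by auto
  then obtain i where "a$i \<noteq> 0" by (metis vec_eq_iff zero_index)
  define s where "s = (\<Sum>i\<in>UNIV. a$i)"
  have "a$i \<le> s" unfolding s_def using anon
    by (intro member_le_sum) auto
  then have spos: "0 < s" using anon[of i] \<open>a$i \<noteq> 0\<close> by linarith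
  define p where "p = (1/s) *\<^sub>R a"
  have pS: "p \<in> prob_simplex" unfolding prob_simplex_def p_def using spos anon
    by (auto simp: s_def sum_divide_distrib[symmetric])
  then obtain j where j: "j \<in> {1..r}" "p \<in> pos_normal_set psi C (zs j)"
    using cover pS by blast
  have eq: "p \<bullet> zs j = Inf ((\<lambda>z'. p \<bullet> z') ` surr_hull psi C)"
    using j(2) unfolding pos_normal_set_def by auto
  have hullnn: "surr_hull psi C \<subseteq> nonneg_orthant"
    unfolding surr_hull_def surr_range_def
    by (rule hull_minimal) (use psi_nonneg convex_orth in auto)
  have "bdd_below ((\<lambda>z'. p \<bullet> z') ` surr_hull psi C)"
  proof (rule bdd_belowI2[where m=0])
    fix x assume "x \<in> surr_hull psi C"
    then have "x \<in> nonneg_orthant" using hullnn by auto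
    then show "0 \<le> p \<bullet> x" using pS unfolding nonneg_orthant_def prob_simplex_def
      by (auto simp: inner_vec_def intro!: sum_nonneg)
  qed
  then have le: "p \<bullet> zs j \<le> p \<bullet> z" unfolding eq using zS by (intro cInf_lower) auto
  have "b < a \<bullet> zs j" using ab(2) inK[OF zsH[OF j(1)] z0] by simp
  then have "a \<bullet> z < a \<bullet> zs j" using ab(1) by linarith
  then have "p \<bullet> z < p \<bullet> zs j" unfolding p_def using spos
    by (simp add: divide_strict_right_mono)
  with le show False by linarith
qed

end
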